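(* Consider the Rayleigh fading channel $y=hx+v$, $v\sim\mathcal{CN}(0,1)$, perfect CSI at transmitter and receiver, $|h|^2$ exponential with unit mean. Let $\mathcal{A}(\mathrm{SNR})\ge1$ be a PAPR depending on $\mathrm{SNR}$, and let $\lambda_0=\lambda_0(\mathrm{SNR})$ be the water-filling level defined by $\mathrm{SNR}=\mathbf{E}[[1/\lambda_0-1/|h|^2]^+]$. Suppose the peak constraint is effective, i.e. $\mathcal{A}(\mathrm{SNR})\,\mathrm{SNR}<1/\lambda_0$ for all small $\mathrm{SNR}$. Let $\lambda=\lambda(\mathrm{SNR})$, with $\lambda\,\mathcal{A}(\mathrm{SNR})\,\mathrm{SNR}<1$, be determined by $$\mathrm{SNR}=\mathbf{E}\left[\min\left\{\left[\frac1\lambda-\frac1{|h|^2}\right]^+,\ \mathcal{A}(\mathrm{SNR})\,\mathrm{SNR}\right\}\right].$$ Then (1) $\mathcal{A}(\mathrm{SNR})\,\mathrm{SNR}\to0$ as $\mathrm{SNR}\to0$; and (2) if moreover $\mathcal{A}(\mathrm{SNR})\to\infty$ as $\mathrm{SNR}\to0$, then $\lambda\to\infty$ as $\mathrm{SNR}\to0$.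
   Context: $[u]^+=\max\{0,u\}$. The water-filling allocation $[1/\lambda_0-1/|h|^2]^+$ is the optimal power allocation without a peak constraint; its peak power is $1/\lambda_0$, and $1/\lambda_0\to0$ as $\mathrm{SNR}\to0$. *)

theory Defs
  imports "HOL-Probability.Probability"
begin

text \<open>Expectation of a function of the channel power gain g = |h|^2, which is
  exponentially distributed with unit mean (Rayleigh fading).\<close>
definition gain_mean :: "(real \<Rightarrow> real) \<Rightarrow> real" where
  "gain_mean f = (\<integral>g. f g * exponential_density 1 g \<partial>lborel)"

definition pos_part :: "real \<Rightarrow> real" where
  "pos_part u = max 0 u"

end

theory Submission
  imports Defs
begin
lemma meas_gt: assumes "c \<ge> 0" shows "measure (density lborel (exponential_density 1)) {c<..} = exp (-c)"
proof -
  let ?M = "density lborel (exponential_density 1)"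
  interpret prob_space ?M by (rule prob_space_exponential_density) simp
  have "emeasure ?M {..c} = ennreal (1 - exp (-c))"
    using emeasure_erlang_density[of 1 0 c] assms by (simp add: erlang_CDF_0)
  hence a: "measure ?M {..c} = 1 - exp (-c)"
    using assms by (simp add: emeasure_eq_measure ennreal_inj)
  have "{c<..} = space ?M - {..c}" by auto
  hence "measure ?M {c<..} = 1 - measure ?M {..c}" by (metis prob_compl sets_lborel sets_density atMost_borel)
  thus ?thesis using a by simp
qed

lemma lower0:
  fixes f :: "real \<Rightarrow> real"
  assumes m: "f \<in> borel_measurable borel" and b: "\<And>g. 0 \<le> f g \<and> f g \<le> K"
    and c: "c \<ge> 0" and a: "a \<ge> 0" and fc: "\<And>g. g > c \<Longrightarrow> f g \<ge> a"
  shows "gain_mean f \<ge> a * exp (-c)"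
proof -
  let ?M = "density lborel (exponential_density 1)"
  interpret prob_space ?M by (rule prob_space_exponential_density) simp
  have eq: "gain_mean f = integral\<^sup>L ?M f"
    unfolding gain_mean_def
    by (subst integral_density) (auto simp: mult.commute m)
  have i1: "integrable ?M f"
    by (rule integrable_const_bound[where B=K]) (use b m in auto)
  have i2: "integrable ?M (\<lambda>g. a * indicator {c<..} g)"
    by (rule integrable_const_bound[where B=a]) (use a in \<open>auto split: split_indicator\<close>)
  have "integral\<^sup>L ?M (\<lambda>g. a * indicator {c<..} g) \<le> integral\<^sup>L ?M f"
    by (rule integral_mono[OF i2 i1]) (use b fc in \<open>auto split: split_indicator\<close>)
  moreover have "integral\<^sup>L ?M (\<lambda>g. a * indicator {c<..} g) = a * exp (-c)"
    using meas_gt[OF c] by simp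
  ultimately show ?thesis using eq by linarith
qed

lemma lower:
  fixes f :: "real \<Rightarrow> real"
  assumes m: "f \<in> borel_measurable borel" and b: "\<And>g. g \<ge> 0 \<Longrightarrow> 0 \<le> f g \<and> f g \<le> K"
    and c: "c \<ge> 0" and a: "a \<ge> 0" and fc: "\<And>g. g > c \<Longrightarrow> f g \<ge> a"
  shows "gain_mean f \<ge> a * exp (-c)"
proof -
  define f' where "f' = (\<lambda>g. if g < 0 then 0 else f g)"
  have "gain_mean f = gain_mean f'"
    unfolding gain_mean_def f'_def
    by (rule Bochner_Integration.integral_cong) (auto simp: exponential_density_def)
  moreover have "gain_mean f' \<ge> a * exp (-c)"
  proof (rule lower0)
    show "f' \<in> borel_measurable borel" unfolding f'_def using m by measurable
    show "0 \<le> f' g \<and> f' g \<le> K" for g using b[of g] b[of 0] by (auto simp: f'_def)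
    show "g > c \<Longrightarrow> f' g \<ge> a" for g using fc[of g] c by (auto simp: f'_def)
  qed (use a c in auto)
  ultimately show ?thesis by simp
qed

lemma inv_small: fixes e g :: real assumes "e > 0" "g > 2/e" shows "1/g < e/2"
proof -
  have "2/e > 0" using assms by simp
  hence g: "g > 0" using assms by linarith
  have "2 < g*e" using assms by (simp add: field_simps)
  thus ?thesis using g assms(1) by (simp add: field_simps)
qed

theorem lemma3:
  fixes A lam0 lam :: "real \<Rightarrow> real"
  assumes PAPR: "\<And>s. s > 0 \<Longrightarrow> A s \<ge> 1"
    and waterfill: "\<And>s. s > 0 \<Longrightarrow>
          lam0 s > 0 \<and> s = gain_mean (\<lambda>g. pos_part (1 / lam0 s - 1 / g))"
    and effective: "\<forall>\<^sub>F s in at_right 0. A s * s < 1 / lam0 s"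
    and lam_def: "\<forall>\<^sub>F s in at_right 0. lam s > 0 \<and> lam s * A s * s < 1 \<and>
          s = gain_mean (\<lambda>g. min (pos_part (1 / lam s - 1 / g)) (A s * s))"
  shows "((\<lambda>s. A s * s) \<longlongrightarrow> 0) (at_right 0)
    \<and> (filterlim A at_top (at_right 0) \<longrightarrow> filterlim lam at_top (at_right 0))"
proof -
  have pos: "\<forall>\<^sub>F s in at_right (0::real). s > 0"
    by (rule eventually_at_rightI[where b=1]) auto
  have L0: "((\<lambda>s. 1/lam0 s) \<longlongrightarrow> 0) (at_right 0)"
  proof (rule order_tendstoI)
    fix e :: real assume "e < 0"
    show "\<forall>\<^sub>F s in at_right 0. e < 1/lam0 s"
      using pos
    proof eventually_elim
      case (elim s)
      then have "lam0 s > 0" using waterfill by blast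
      then have "1/lam0 s > 0" by simp
      then show ?case using \<open>e<0\<close> by linarith
    qed
  next
    fix e :: real assume e: "e > 0"
    show "\<forall>\<^sub>F s in at_right 0. 1/lam0 s < e"
    proof (rule eventually_at_rightI[where b="e/2 * exp (-(2/e))"])
      fix s assume s: "s \<in> {0<..<e/2 * exp (-(2/e))}"
      show "1/lam0 s < e"
      proof (rule ccontr)
        assume "\<not> 1/lam0 s < e"
        hence L: "1/lam0 s \<ge> e" by simp
        have w: "lam0 s > 0" "s = gain_mean (\<lambda>g. pos_part (1 / lam0 s - 1 / g))"
          using waterfill s by auto
        have "gain_mean (\<lambda>g. pos_part (1 / lam0 s - 1 / g)) \<ge> e/2 * exp (-(2/e))"
        proof (rule lower[where K="1/lam0 s"])
          show "(\<lambda>g. pos_part (1 / lam0 s - 1 / g)) \<in> borel_measurable borel"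
            unfolding pos_part_def by measurable
          show "0 \<le> pos_part (1 / lam0 s - 1 / g) \<and> pos_part (1 / lam0 s - 1 / g) \<le> 1/lam0 s"
            if "g \<ge> 0" for g using that w(1) by (auto simp: pos_part_def)
          show "e/2 \<le> pos_part (1 / lam0 s - 1 / g)" if "g > 2/e" for g
          proof -
            have "1/lam0 s - 1/g \<ge> e/2" using inv_small[OF e that] L by linarith
            thus ?thesis unfolding pos_part_def by (simp add: le_max_iff_disj)
          qed
        qed (use e in auto)
        thus False using w s by simp
      qed
    qed (use e in simp)
  qed
  have P0: "((\<lambda>s. A s * s) \<longlongrightarrow> 0) (at_right 0)"
  proof (rule tendsto_sandwich[OF _ _ tendsto_const L0])
    show "\<forall>\<^sub>F s in at_right 0. 0 \<le> A s * s"
      using pos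
    proof eventually_elim
      case (elim s)
      then have "A s \<ge> 1" using PAPR by blast
      then show ?case using elim by simp
    qed
    show "\<forall>\<^sub>F s in at_right 0. A s * s \<le> 1/lam0 s"
      using effective by eventually_elim simp
  qed
  moreover have "filterlim lam at_top (at_right 0)" if Ainf: "filterlim A at_top (at_right 0)"
  proof (subst filterlim_at_top, intro allI)
    fix Z :: real
    define Z' where "Z' = max Z 1"
    define e where "e = 1/Z'"
    have Z': "Z' > 0" "Z \<le> Z'" by (auto simp: Z'_def)
    have e: "e > 0" using Z' by (simp add: e_def)
    have ev1: "\<forall>\<^sub>F s in at_right 0. A s * s < e/2"
      using order_tendstoD(2)[OF P0, of "e/2"] e by simp
    have ev2: "\<forall>\<^sub>F s in at_right 0. A s \<ge> exp (2/e) + 1"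
      using Ainf by (simp add: filterlim_at_top)
    show "\<forall>\<^sub>F s in at_right 0. Z \<le> lam s"
      using ev1 ev2 lam_def pos
    proof eventually_elim
      case (elim s)
      show ?case
      proof (rule ccontr)
        assume "\<not> Z \<le> lam s"
        hence "lam s < Z'" using Z' by simp
        hence mu: "1/lam s > e" unfolding e_def using elim by (intro divide_strict_left_mono) auto
        let ?P = "A s * s"
        have Pnn: "?P \<ge> 0" using PAPR[of s] elim by simp
        have "gain_mean (\<lambda>g. min (pos_part (1 / lam s - 1 / g)) ?P) \<ge> ?P * exp (-(2/e))"
        proof (rule lower[where K="?P"])
          show "(\<lambda>g. min (pos_part (1 / lam s - 1 / g)) ?P) \<in> borel_measurable borel"
            unfolding pos_part_def by measurable
          show "0 \<le> min (pos_part (1 / lam s - 1 / g)) ?P \<and> min (pos_part (1 / lam s - 1 / g)) ?P \<le> ?P"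
            for g using Pnn by (auto simp: pos_part_def)
          show "?P \<le> min (pos_part (1 / lam s - 1 / g)) ?P" if "g > 2/e" for g
          proof -
            have "1/lam s - 1/g \<ge> ?P" using inv_small[OF e that] mu elim by linarith
            thus ?thesis unfolding pos_part_def by (simp add: le_max_iff_disj)
          qed
        qed (use e Pnn in auto)
        hence "s \<ge> A s * s * exp (-(2/e))" using elim by simp
        moreover have "A s * exp (-(2/e)) > 1"
        proof -
          have "A s > exp (2/e)" using elim by simp
          hence "A s * exp (-(2/e)) > exp (2/e) * exp (-(2/e))"
            by (intro mult_strict_right_mono) auto
          thus ?thesis by (simp add: exp_minus)
        qed
        hence "s * (A s * exp (-(2/e))) > s * 1" using elim
          by (intro mult_strict_left_mono) auto
        hence "A s * s * exp (-(2/e)) > s" by (simp add: algebra_simps)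
        ultimately show False by simp
      qed
    qed
  qed
  ultimately show ?thesis by simp
qed
end
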